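(* Let $C\in\mathbb{N}$, $\mathbf{c}\in\mathbb{R}^C$, $\mathbf{n}\in\mathbb{N}^C$, $\boldsymbol{\mu}\in\mathbb{R}^C$, and let $$\mathrm{sb}(\theta;\mathbf{c},\mathbf{n},\boldsymbol{\mu})=\frac{1}{B}\sum_{i=1}^C c_i\cos(n_i(\theta-\mu_i))+\frac{A}{B},\quad A=\sum_{i=1}^C|c_i|,\quad B=2\pi\Big(\sum_{i=1}^C|c_i|+\sum_{i:n_i=0}c_i\Big),$$ be the spectrally bounded probability density on angles $\theta\in[-\pi,\pi)$ (identified with the unit circle $\mathbb{S}^1$ with geodesic distance). Consider a unit circle geometric graph with $N$ nodes sampled i.i.d. according to this angular density and constant neighborhood radius $\alpha$ (two nodes adjacent iff their geodesic distance is at most $\alpha$). Then the expected degree of a node at angle $\theta$ (i.e. $N$ times the probability under this density of the geodesic ball of radius $\alpha$ about $\theta$) is $$\deg(\theta)=\frac{2N}{B}\Big(\sum_{i:n_i\ne0}\frac{c_i}{n_i}\cos(n_i(\theta-\mu_i))\sin(n_i\alpha)+\Big(\sum_{i:n_i=0}c_i+A\Big)\alpha\Big),$$ and the expected average degree of the graph (the expectation of $\deg(\theta)$ for $\theta$ distributed with density $\mathrm{sb}$) is $$\mathbb{E}[\deg(\theta)]=\frac{2\pi N\alpha}{B^2}\Big(\sum_{i:n_i\ne0}\ \sum_{j:n_j=n_i}c_ic_j\cos(n_i(\mu_i-\mu_j))\frac{\sin(n_i\alpha)}{n_i\alpha}+2\Big(\sum_{i:n_i=0}c_i+A\Big)^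2\Big).$$
   Context: Here $\mathbb{N}$ includes $0$ (the indices with $n_i=0$ contribute constant terms). The function $\mathrm{sb}$ is a continuous, $2\pi$-periodic probability density. *)

theory Defs
  imports "HOL-Analysis.Analysis"
begin

definition sbA :: "nat \<Rightarrow> (nat \<Rightarrow> real) \<Rightarrow> real" where
  "sbA C c = (\<Sum>i\<in>{1..C}. \<bar>c i\<bar>)"

definition sbB :: "nat \<Rightarrow> (nat \<Rightarrow> real) \<Rightarrow> (nat \<Rightarrow> nat) \<Rightarrow> real" where
  "sbB C c n = 2 * pi * ((\<Sum>i\<in>{1..C}. \<bar>c i\<bar>) + (\<Sum>i\<in>{i\<in>{1..C}. n i = 0}. c i))"

definition sb :: "nat \<Rightarrow> (nat \<Rightarrow> real) \<Rightarrow> (nat \<Rightarrow> nat) \<Rightarrow> (nat \<Rightarrow> real) \<Rightarrow> real \<Rightarrow> real" where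
  "sb C c n mu \<theta> =
     (1 / sbB C c n) * (\<Sum>i\<in>{1..C}. c i * cos (real (n i) * (\<theta> - mu i))) + sbA C c / sbB C c n"

definition sb_measure :: "nat \<Rightarrow> (nat \<Rightarrow> real) \<Rightarrow> (nat \<Rightarrow> nat) \<Rightarrow> (nat \<Rightarrow> real) \<Rightarrow> real measure" where
  "sb_measure C c n mu =
     density lborel (\<lambda>t. ennreal (indicator {-pi..<pi} t * sb C c n mu t))"

definition circ_dist :: "real \<Rightarrow> real \<Rightarrow> real" where
  "circ_dist s t = arccos (cos (s - t))"

definition exp_degree :: "nat \<Rightarrow> nat \<Rightarrow> (nat \<Rightarrow> real) \<Rightarrow> (nat \<Rightarrow> nat) \<Rightarrow> (nat \<Rightarrow> real) \<Rightarrow> real \<Rightarrow> real \<Rightarrow> real" where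
  "exp_degree N C c n mu \<alpha> \<theta> =
     real N * measure (sb_measure C c n mu) {t. circ_dist \<theta> t \<le> \<alpha>}"

end

theory Submission
  imports Defs
begin

lemma cos_lin_integral:
  fixes k phi a b :: real
  assumes "k \<noteq> 0" "a \<le> b"
  shows "((\<lambda>x. cos (k * x + phi)) has_integral ((sin (k * b + phi) - sin (k * a + phi)) / k)) {a..b}"
proof -
  have "((\<lambda>x. sin (k * x + phi) / k) has_vector_derivative cos (k * x + phi)) (at x within {a..b})" for x
  proof -
    have "((\<lambda>x. sin (k * x + phi) / k) has_real_derivative cos (k * x + phi)) (at x within {a..b})"
      using assms(1) by (auto intro!: derivative_eq_intros)
    then show ?thesis by (simp add: has_real_derivative_iff_has_vector_derivative)
  qed
  from fundamental_theorem_of_calculus[OF assms(2) this]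
  show ?thesis by (simp add: diff_divide_distrib)
qed

lemma cos_int_period_integral:
  fixes k :: int and phi :: real
  shows "((\<lambda>x. cos (of_int k * x + phi)) has_integral (if k = 0 then 2 * pi * cos phi else 0)) {-pi..pi}"
proof (cases "k = 0")
  case True
  then show ?thesis using has_integral_const_real[of "cos phi" "-pi" pi] by simp
next
  case False
  have "sin (of_int k * pi + phi) = sin (of_int k * (-pi) + phi + (2*pi) * of_int k)"
    by (simp add: algebra_simps)
  also have "\<dots> = sin (of_int k * (-pi) + phi)"
    by (simp only: sin_add cos_int_2pin sin_int_2pin) simp
  finally have e: "sin (of_int k * pi + phi) = sin (of_int k * (-pi) + phi)" .
  show ?thesis using cos_lin_integral[of "of_int k" "-pi" pi phi] False e by simp
qed

lemma cos_cos_integral: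
  fixes n m :: nat and a b :: real
  shows "((\<lambda>x. cos (real n * (x - a)) * cos (real m * (x - b))) has_integral
     (if n = m then (if n = 0 then 2 * pi else pi * cos (real n * (a - b))) else 0)) {-pi..pi}"
proof -
  define p1 where "p1 = real m * b - real n * a"
  define p2 where "p2 = - (real n * a) - real m * b"
  have fe: "cos (real n * (x - a)) * cos (real m * (x - b)) =
     cos (of_int (int n - int m) * x + p1) / 2 + cos (of_int (int n + int m) * x + p2) / 2" for x
    unfolding cos_times_cos p1_def p2_def by (simp add: algebra_simps add_divide_distrib)
  have I: "((\<lambda>x. cos (of_int (int n - int m) * x + p1) / 2 + cos (of_int (int n + int m) * x + p2) / 2)
     has_integral ((if int n - int m = 0 then 2 * pi * cos p1 else 0) / 2 +
                   (if int n + int m = 0 then 2 * pi * cos p2 else 0) / 2)) {-pi..pi}"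
    by (intro has_integral_add has_integral_divide cos_int_period_integral)
  have v: "(if int n - int m = 0 then 2 * pi * cos p1 else 0) / 2 +
                   (if int n + int m = 0 then 2 * pi * cos p2 else 0) / 2
      = (if n = m then (if n = 0 then 2 * pi else pi * cos (real n * (a - b))) else 0)"
  proof (cases "n = m")
    case True
    then have "cos p1 = cos (real n * (a - b))" unfolding p1_def
      by (metis cos_minus minus_diff_eq right_diff_distrib)
    with True show ?thesis by (auto simp: p2_def)
  qed auto
  show ?thesis using I unfolding v fe[symmetric] .
qed

definition Pm :: "nat \<Rightarrow> real \<Rightarrow> real \<Rightarrow> real" where
  "Pm m mu x = (if m = 0 then x else sin (real m * (x - mu)) / real m)"

lemma cos_Pm_integral:
  fixes a b mu :: real
  assumes "a \<le> b"
  shows "((\<lambda>x. cos (real m * (x - mu))) has_integral (Pm m mu b - Pm m mu a)) {a..b}"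
proof (cases "m = 0")
  case True
  then show ?thesis using has_integral_const_real[of "1::real" a b] assms by (simp add: Pm_def)
next
  case False
  have "(\<lambda>x. cos (real m * (x - mu))) = (\<lambda>x. cos (real m * x + (- real m * mu)))"
    by (simp add: algebra_simps)
  with cos_lin_integral[of "real m" a b "- real m * mu"] False assms show ?thesis
    by (simp add: Pm_def algebra_simps diff_divide_distrib)
qed


definition Fa :: "nat \<Rightarrow> (nat \<Rightarrow> real) \<Rightarrow> (nat \<Rightarrow> nat) \<Rightarrow> (nat \<Rightarrow> real) \<Rightarrow> real \<Rightarrow> real" where
  "Fa C c n mu x = (1 / sbB C c n) * ((\<Sum>j\<in>{1..C}. c j * Pm (n j) (mu j) x) + sbA C c * x)"

lemma sb_integral:
  assumes "a \<le> b"
  shows "(sb C c n mu has_integral (Fa C c n mu b - Fa C c n mu a)) {a..b}"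
proof -
  have h1: "((\<lambda>x. (1 / sbB C c n) * (\<Sum>j\<in>{1..C}. c j * cos (real (n j) * (x - mu j))))
     has_integral ((1 / sbB C c n) * (\<Sum>j\<in>{1..C}. c j * (Pm (n j) (mu j) b - Pm (n j) (mu j) a)))) {a..b}"
    by (intro has_integral_mult_right has_integral_sum cos_Pm_integral assms finite_atLeastAtMost)
  have h2: "((\<lambda>x. sbA C c / sbB C c n) has_integral ((b - a) * (sbA C c / sbB C c n))) {a..b}"
    using has_integral_const_real[of "sbA C c / sbB C c n" a b] assms by simp
  have "((\<lambda>x. (1 / sbB C c n) * (\<Sum>j\<in>{1..C}. c j * cos (real (n j) * (x - mu j))) + sbA C c / sbB C c n)
     has_integral ((1 / sbB C c n) * (\<Sum>j\<in>{1..C}. c j * (Pm (n j) (mu j) b - Pm (n j) (mu j) a))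
        + (b - a) * (sbA C c / sbB C c n))) {a..b}"
    by (rule has_integral_add[OF h1 h2])
  moreover have "(1 / sbB C c n) * (\<Sum>j\<in>{1..C}. c j * (Pm (n j) (mu j) b - Pm (n j) (mu j) a))
        + (b - a) * (sbA C c / sbB C c n) = Fa C c n mu b - Fa C c n mu a"
    unfolding Fa_def
    by (simp add: sum_subtractf right_diff_distrib algebra_simps add_divide_distrib diff_divide_distrib)
  ultimately show ?thesis unfolding sb_def[abs_def] by simp
qed

lemma Pm_period: "Pm m mu (x + 2 * pi) = Pm m mu x + (if m = 0 then 2 * pi else 0)"
proof -
  have "sin (real m * (x + 2 * pi - mu)) = sin (real m * (x - mu) + (2 * pi) * of_int (int m))"
    by (simp add: algebra_simps)
  also have "\<dots> = sin (real m * (x - mu))"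
    by (simp only: sin_add cos_int_2pin sin_int_2pin mult_1_right mult_zero_right add_0_right)
  finally show ?thesis by (simp add: Pm_def)
qed

lemma Fa_period:
  assumes "sbB C c n > 0"
  shows "Fa C c n mu (x + 2 * pi) = Fa C c n mu x + 1"
proof -
  have "(\<Sum>j\<in>{1..C}. c j * Pm (n j) (mu j) (x + 2 * pi)) =
        (\<Sum>j\<in>{1..C}. c j * Pm (n j) (mu j) x) + 2 * pi * (\<Sum>j\<in>{1..C}. if n j = 0 then c j else 0)"
  proof -
    have "c j * Pm (n j) (mu j) (x + 2 * pi) = c j * Pm (n j) (mu j) x + 2 * pi * (if n j = 0 then c j else 0)" for j
      using Pm_period[of "n j" "mu j" x] by (auto simp: distrib_left)
    then show ?thesis by (simp add: sum.distrib sum_distrib_left)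
  qed
  also have "(\<Sum>j\<in>{1..C}. if n j = 0 then c j else 0) = (\<Sum>i\<in>{i\<in>{1..C}. n i = 0}. c i)"
    by (rule sum.inter_filter[symmetric]) simp
  finally have e: "(\<Sum>j\<in>{1..C}. c j * Pm (n j) (mu j) (x + 2 * pi)) =
        (\<Sum>j\<in>{1..C}. c j * Pm (n j) (mu j) x) + 2 * pi * (\<Sum>i\<in>{i\<in>{1..C}. n i = 0}. c i)" .
  have B: "sbB C c n = 2 * pi * (sbA C c + (\<Sum>i\<in>{i\<in>{1..C}. n i = 0}. c i))"
    by (simp add: sbB_def sbA_def)
  show ?thesis using assms unfolding Fa_def e B
    by (simp add: field_simps)
qed

lemma sb_nonneg:
  assumes "sbB C c n > 0"
  shows "sb C c n mu x \<ge> 0"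
proof -
  have "\<bar>\<Sum>i\<in>{1..C}. c i * cos (real (n i) * (x - mu i))\<bar> \<le> (\<Sum>i\<in>{1..C}. \<bar>c i * cos (real (n i) * (x - mu i))\<bar>)"
    by (rule sum_abs)
  also have "\<dots> \<le> (\<Sum>i\<in>{1..C}. \<bar>c i\<bar>)"
    by (intro sum_mono) (simp add: abs_mult mult_left_le)
  finally have "0 \<le> (\<Sum>i\<in>{1..C}. c i * cos (real (n i) * (x - mu i))) + sbA C c"
    unfolding sbA_def by linarith
  then have "0 \<le> ((\<Sum>i\<in>{1..C}. c i * cos (real (n i) * (x - mu i))) + sbA C c) / sbB C c n"
    using assms by simp
  then show ?thesis unfolding sb_def by (simp add: add_divide_distrib)
qed


lemma circ_dist_le_iff:
  assumes "0 \<le> \<alpha>" "\<alpha> \<le> pi"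
  shows "circ_dist s t \<le> \<alpha> \<longleftrightarrow> cos \<alpha> \<le> cos (s - t)"
proof -
  have "arccos (cos \<alpha>) = \<alpha>" using assms by (simp add: arccos_cos)
  then have "circ_dist s t \<le> \<alpha> \<longleftrightarrow> arccos (cos (s - t)) \<le> arccos (cos \<alpha>)"
    by (simp add: circ_dist_def)
  also have "\<dots> \<longleftrightarrow> cos \<alpha> \<le> cos (s - t)"
    by (rule arccos_le_mono) auto
  finally show ?thesis .
qed

lemma cos_le_iff_abs:
  assumes "0 \<le> \<alpha>" "\<alpha> \<le> pi" "-2*pi < u" "u < 2*pi"
  shows "cos \<alpha> \<le> cos u \<longleftrightarrow> (\<bar>u\<bar> \<le> \<alpha> \<or> 2*pi - \<alpha> \<le> \<bar>u\<bar>)"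
proof -
  have cu: "cos u = cos \<bar>u\<bar>" by (simp add: abs_if)
  show ?thesis
  proof (cases "\<bar>u\<bar> \<le> pi")
    case True
    then show ?thesis unfolding cu using assms cos_mono_le_eq[of \<alpha> "\<bar>u\<bar>"] by auto
  next
    case False
    have "cos \<bar>u\<bar> = cos (2*pi - \<bar>u\<bar>)" by (simp add: cos_diff)
    then show ?thesis unfolding cu using assms False cos_mono_le_eq[of \<alpha> "2*pi - \<bar>u\<bar>"] by auto
  qed
qed

lemma ball_integral:
  fixes C :: nat and c mu :: "nat \<Rightarrow> real" and n :: "nat \<Rightarrow> nat"
  assumes B: "sbB C c n > 0" and al: "0 \<le> \<alpha>" "\<alpha> \<le> pi" and th: "-pi \<le> \<theta>" "\<theta> < pi"
  shows "(sb C c n mu has_integral (Fa C c n mu (\<theta> + \<alpha>) - Fa C c n mu (\<theta> - \<alpha>)))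
           ({t. circ_dist \<theta> t \<le> \<alpha>} \<inter> {-pi..<pi})"
proof -
  let ?S = "{t. circ_dist \<theta> t \<le> \<alpha>} \<inter> {-pi..<pi}"
  let ?F = "Fa C c n mu"
  have memS: "t \<in> ?S \<longleftrightarrow> -pi \<le> t \<and> t < pi \<and> (\<bar>\<theta> - t\<bar> \<le> \<alpha> \<or> 2*pi - \<alpha> \<le> \<bar>\<theta> - t\<bar>)" for t
  proof (cases "-pi \<le> t \<and> t < pi")
    case True
    then show ?thesis using circ_dist_le_iff[OF al, of \<theta> t] cos_le_iff_abs[OF al, of "\<theta> - t"] th by auto
  qed auto
  have spike: "(sb C c n mu has_integral v) ?S" if "(sb C c n mu has_integral v) T"
      "\<And>t. -pi \<le> t \<Longrightarrow> t < pi \<Longrightarrow> (\<bar>\<theta> - t\<bar> \<le> \<alpha> \<or> 2*pi - \<alpha> \<le> \<bar>\<theta> - t\<bar>) \<Longrightarrow> t \<notin> T \<Longrightarrow> t = -pi \<or> t = pi"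
      "\<And>t. t \<in> T \<Longrightarrow> \<not> (-pi \<le> t \<and> t < pi \<and> (\<bar>\<theta> - t\<bar> \<le> \<alpha> \<or> 2*pi - \<alpha> \<le> \<bar>\<theta> - t\<bar>)) \<Longrightarrow> t = -pi \<or> t = pi"
      for T v
  proof -
    have s1: "?S - T \<subseteq> {-pi, pi}" using that(2) unfolding memS subset_iff Diff_iff by blast
    have s2: "T - ?S \<subseteq> {-pi, pi}" using that(3) unfolding memS subset_iff Diff_iff by blast
    have "negligible {x \<in> T - ?S. sb C c n mu x \<noteq> 0}"
      by (rule negligible_subset[of "{-pi, pi}"]) (use s1 s2 in auto)
    moreover have "negligible {x \<in> ?S - T. sb C c n mu x \<noteq> 0}"
      by (rule negligible_subset[of "{-pi, pi}"]) (use s1 s2 in auto)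
    ultimately show ?thesis using has_integral_spike_set_eq that(1) by blast
  qed
  have F1: "?F (x + 2*pi) = ?F x + 1" for x using Fa_period[OF B] by simp
  consider "-pi \<le> \<theta> - \<alpha> \<and> \<theta> + \<alpha> \<le> pi" | "\<theta> - \<alpha> < -pi" | "\<theta> + \<alpha> > pi" by linarith
  then show ?thesis
  proof cases
    case 1
    have I: "(sb C c n mu has_integral (?F (\<theta> + \<alpha>) - ?F (\<theta> - \<alpha>))) {\<theta> - \<alpha>..\<theta> + \<alpha>}"
      using al by (intro sb_integral) simp
    show ?thesis
      apply (rule spike[OF I]) using 1 al th by auto
  next
    case 2
    have I1: "(sb C c n mu has_integral (?F (\<theta> + \<alpha>) - ?F (-pi))) {-pi..\<theta> + \<alpha>}"
      using al th by (intro sb_integral) simp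
    have I2: "(sb C c n mu has_integral (?F pi - ?F (\<theta> - \<alpha> + 2*pi))) {\<theta> - \<alpha> + 2*pi..pi}"
      using 2 by (intro sb_integral) simp
    have neg: "negligible ({-pi..\<theta> + \<alpha>} \<inter> {\<theta> - \<alpha> + 2*pi..pi})"
      by (rule negligible_subset[of "{\<theta> + \<alpha>}"]) (use al in auto)
    have I: "(sb C c n mu has_integral (?F (\<theta> + \<alpha>) - ?F (\<theta> - \<alpha>))) ({-pi..\<theta> + \<alpha>} \<union> {\<theta> - \<alpha> + 2*pi..pi})"
    proof -
      have "?F pi = ?F (-pi) + 1" using F1[of "-pi"] by simp
      moreover have "?F (\<theta> - \<alpha> + 2*pi) = ?F (\<theta> - \<alpha>) + 1" using F1 by simp
      ultimately show ?thesis using has_integral_Un[OF I1 I2 neg] by simp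
    qed
    show ?thesis
      apply (rule spike[OF I]) using 2 al th by auto
  next
    case 3
    have I1: "(sb C c n mu has_integral (?F (\<theta> + \<alpha> - 2*pi) - ?F (-pi))) {-pi..\<theta> + \<alpha> - 2*pi}"
      using 3 by (intro sb_integral) simp
    have I2: "(sb C c n mu has_integral (?F pi - ?F (\<theta> - \<alpha>))) {\<theta> - \<alpha>..pi}"
      using al th by (intro sb_integral) simp
    have neg: "negligible ({-pi..\<theta> + \<alpha> - 2*pi} \<inter> {\<theta> - \<alpha>..pi})"
      by (rule negligible_subset[of "{\<theta> - \<alpha>}"]) (use al in auto)
    have I: "(sb C c n mu has_integral (?F (\<theta> + \<alpha>) - ?F (\<theta> - \<alpha>))) ({-pi..\<theta> + \<alpha> - 2*pi} \<union> {\<theta> - \<alpha>..pi})"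
    proof -
      have "?F pi = ?F (-pi) + 1" using F1[of "-pi"] by simp
      moreover have "?F (\<theta> + \<alpha>) = ?F (\<theta> + \<alpha> - 2*pi) + 1" using F1[of "\<theta> + \<alpha> - 2*pi"] by simp
      ultimately show ?thesis using has_integral_Un[OF I1 I2 neg] by (simp add: algebra_simps)
    qed
    show ?thesis
      apply (rule spike[OF I]) using 3 al th by auto
  qed
qed


lemma sb_measurable[measurable]: "sb C c n mu \<in> borel_measurable borel"
  unfolding sb_def by measurable

lemma measure_ball:
  fixes C :: nat and c mu :: "nat \<Rightarrow> real" and n :: "nat \<Rightarrow> nat"
  assumes B: "sbB C c n > 0" and al: "0 \<le> \<alpha>" "\<alpha> \<le> pi" and th: "-pi \<le> \<theta>" "\<theta> < pi"
  shows "measure (sb_measure C c n mu) {t. circ_dist \<theta> t \<le> \<alpha>} = Fa C c n mu (\<theta> + \<alpha>) - Fa C c n mu (\<theta> - \<alpha>)"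
proof -
  let ?S = "{t. circ_dist \<theta> t \<le> \<alpha>} \<inter> {-pi..<pi}"
  let ?v = "Fa C c n mu (\<theta> + \<alpha>) - Fa C c n mu (\<theta> - \<alpha>)"
  have I: "(sb C c n mu has_integral ?v) ?S" by (rule ball_integral[OF B al th])
  have v0: "0 \<le> ?v" by (rule has_integral_nonneg[OF I]) (use sb_nonneg[OF B] in auto)
  have Xe: "{t. circ_dist \<theta> t \<le> \<alpha>} = {t. cos \<alpha> \<le> cos (\<theta> - t)}"
    using circ_dist_le_iff[OF al] by auto
  have Xm: "{t. circ_dist \<theta> t \<le> \<alpha>} \<in> sets lborel" unfolding Xe by measurable
  have "emeasure (sb_measure C c n mu) {t. circ_dist \<theta> t \<le> \<alpha>} =
     (\<integral>\<^sup>+ t. ennreal (indicator {-pi..<pi} t * sb C c n mu t) * indicator {t. circ_dist \<theta> t \<le> \<alpha>} t \<partial>lborel)"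
    unfolding sb_measure_def by (rule emeasure_density[OF _ Xm]) measurable
  also have "\<dots> = (\<integral>\<^sup>+ t. ennreal (sb C c n mu t) * indicator ?S t \<partial>lborel)"
    by (intro nn_integral_cong) (auto simp: indicator_def)
  also have "\<dots> = ennreal ?v"
    by (rule nn_integral_has_integral_lebesgue'[OF _ I]) (use sb_nonneg[OF B] in auto)
  finally show ?thesis using v0 by (simp add: measure_def)
qed

lemma Fa_diff:
  "Fa C c n mu (\<theta> + \<alpha>) - Fa C c n mu (\<theta> - \<alpha>) =
     2 / sbB C c n *
       ((\<Sum>i\<in>{i\<in>{1..C}. n i \<noteq> 0}. c i / real (n i) * cos (real (n i) * (\<theta> - mu i))
                 * sin (real (n i) * \<alpha>))
              + ((\<Sum>i\<in>{i\<in>{1..C}. n i = 0}. c i) + sbA C c) * \<alpha>)"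
proof -
  have pd: "c j * (Pm (n j) (mu j) (\<theta> + \<alpha>) - Pm (n j) (mu j) (\<theta> - \<alpha>)) =
     2 * (if n j = 0 then c j * \<alpha> else c j / real (n j) * cos (real (n j) * (\<theta> - mu j)) * sin (real (n j) * \<alpha>))" for j
  proof (cases "n j = 0")
    case False
    have "sin (real (n j) * (\<theta> + \<alpha> - mu j)) - sin (real (n j) * (\<theta> - \<alpha> - mu j)) =
          2 * cos (real (n j) * (\<theta> - mu j)) * sin (real (n j) * \<alpha>)"
    proof -
      have "sin (real (n j) * (\<theta> + \<alpha> - mu j)) = sin (real (n j) * (\<theta> - mu j) + real (n j) * \<alpha>)"
        by (simp add: algebra_simps)
      moreover have "sin (real (n j) * (\<theta> - \<alpha> - mu j)) = sin (real (n j) * (\<theta> - mu j) - real (n j) * \<alpha>)"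
        by (simp add: algebra_simps)
      ultimately show ?thesis by (simp add: sin_add sin_diff)
    qed
    then show ?thesis using False by (simp add: Pm_def diff_divide_distrib[symmetric] algebra_simps)
  qed (simp add: Pm_def algebra_simps)
  have "(\<Sum>j\<in>{1..C}. c j * Pm (n j) (mu j) (\<theta> + \<alpha>)) - (\<Sum>j\<in>{1..C}. c j * Pm (n j) (mu j) (\<theta> - \<alpha>))
     = (\<Sum>j\<in>{1..C}. c j * (Pm (n j) (mu j) (\<theta> + \<alpha>) - Pm (n j) (mu j) (\<theta> - \<alpha>)))"
    by (simp add: sum_subtractf right_diff_distrib)
  also have "\<dots> = 2 * (\<Sum>j\<in>{1..C}. if n j = 0 then c j * \<alpha> else c j / real (n j) * cos (real (n j) * (\<theta> - mu j)) * sin (real (n j) * \<alpha>))"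
    by (simp add: pd sum_distrib_left)
  also have "(\<Sum>j\<in>{1..C}. if n j = 0 then c j * \<alpha> else c j / real (n j) * cos (real (n j) * (\<theta> - mu j)) * sin (real (n j) * \<alpha>))
     = (\<Sum>i\<in>{i\<in>{1..C}. n i = 0}. c i) * \<alpha> + (\<Sum>i\<in>{i\<in>{1..C}. n i \<noteq> 0}. c i / real (n i) * cos (real (n i) * (\<theta> - mu i))
                 * sin (real (n i) * \<alpha>))"
    by (simp add: sum.If_cases sum_distrib_right Int_def Collect_conj_eq[symmetric] conj_commute)
  finally have e: "(\<Sum>j\<in>{1..C}. c j * Pm (n j) (mu j) (\<theta> + \<alpha>)) - (\<Sum>j\<in>{1..C}. c j * Pm (n j) (mu j) (\<theta> - \<alpha>))
    = 2 * ((\<Sum>i\<in>{i\<in>{1..C}. n i = 0}. c i) * \<alpha> + (\<Sum>i\<in>{i\<in>{1..C}. n i \<noteq> 0}. c i / real (n i) * cos (real (n i) * (\<theta> - mu i))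
                 * sin (real (n i) * \<alpha>)))" .
  have "Fa C c n mu (\<theta> + \<alpha>) - Fa C c n mu (\<theta> - \<alpha>) = (1 / sbB C c n) *
     (((\<Sum>j\<in>{1..C}. c j * Pm (n j) (mu j) (\<theta> + \<alpha>)) - (\<Sum>j\<in>{1..C}. c j * Pm (n j) (mu j) (\<theta> - \<alpha>))) + 2 * sbA C c * \<alpha>)"
    unfolding Fa_def right_diff_distrib[symmetric] by (simp add: algebra_simps)
  also have "\<dots> = 2 / sbB C c n *
       ((\<Sum>i\<in>{i\<in>{1..C}. n i \<noteq> 0}. c i / real (n i) * cos (real (n i) * (\<theta> - mu i))
                 * sin (real (n i) * \<alpha>))
              + ((\<Sum>i\<in>{i\<in>{1..C}. n i = 0}. c i) + sbA C c) * \<alpha>)"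
    unfolding e by (simp add: algebra_simps)
  finally show ?thesis .
qed


lemma cos_single_integral:
  "((\<lambda>x. cos (real m * (x - a))) has_integral (if m = 0 then 2 * pi else 0)) {-pi..pi}"
  using cos_cos_integral[of m a 0 0] by (cases "m = 0") simp_all

lemma product_integral:
  fixes N C :: nat and c mu :: "nat \<Rightarrow> real" and n :: "nat \<Rightarrow> nat" and \<alpha> :: real
  defines "A \<equiv> sbA C c" and "B \<equiv> sbB C c n"
  shows "((\<lambda>\<theta>. sb C c n mu \<theta> * (2 * real N / B *
             ((\<Sum>i\<in>{i\<in>{1..C}. n i \<noteq> 0}. c i / real (n i) * cos (real (n i) * (\<theta> - mu i))
                 * sin (real (n i) * \<alpha>))
              + ((\<Sum>i\<in>{i\<in>{1..C}. n i = 0}. c i) + A) * \<alpha>))) has_integral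
           (2 * pi * real N * \<alpha> / B^2 *
             ((\<Sum>i\<in>{i\<in>{1..C}. n i \<noteq> 0}. \<Sum>j\<in>{j\<in>{1..C}. n j = n i}.
                 c i * c j * cos (real (n i) * (mu i - mu j)) * (sin (real (n i) * \<alpha>) / (real (n i) * \<alpha>)))
              + 2 * ((\<Sum>i\<in>{i\<in>{1..C}. n i = 0}. c i) + A)^2))) {-pi..pi}"
proof -
  define J where "J = {1..C}"
  define Nz where "Nz = {i\<in>J. n i \<noteq> 0}"
  define Z where "Z = (\<Sum>i\<in>{i\<in>J. n i = 0}. c i)"
  define D where "D = Z + A"
  define K where "K i = c i / real (n i) * sin (real (n i) * \<alpha>)" for i
  define cs where "cs j x = cos (real (n j) * (x - mu j))" for j x
  define L1 where "L1 j i = (if n j = n i then (if n j = 0 then 2 * pi else pi * cos (real (n j) * (mu j - mu i))) else 0)" for j i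
  define L0 where "L0 j = (if n j = 0 then 2 * pi else (0::real))" for j
  have fin: "finite J" "finite Nz" unfolding J_def Nz_def by auto
  have pw: "sb C c n mu x * (2 * real N / B *
             ((\<Sum>i\<in>{i\<in>{1..C}. n i \<noteq> 0}. c i / real (n i) * cos (real (n i) * (x - mu i))
                 * sin (real (n i) * \<alpha>))
              + ((\<Sum>i\<in>{i\<in>{1..C}. n i = 0}. c i) + A) * \<alpha>))
     = (2 * real N / B^2) * ((\<Sum>j\<in>J. \<Sum>i\<in>Nz. c j * K i * (cs j x * cs i x))
         + D * \<alpha> * (\<Sum>j\<in>J. c j * cs j x) + A * (\<Sum>i\<in>Nz. K i * cs i x) + A * D * \<alpha>)" for x
  proof -
    have e1: "(\<Sum>i\<in>{i\<in>{1..C}. n i \<noteq> 0}. c i / real (n i) * cos (real (n i) * (x - mu i)) * sin (real (n i) * \<alpha>))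
       = (\<Sum>i\<in>Nz. K i * cs i x)"
      unfolding Nz_def J_def K_def cs_def by (intro sum.cong) auto
    have e2: "sb C c n mu x = (1 / B) * ((\<Sum>j\<in>J. c j * cs j x) + A)"
      unfolding sb_def J_def cs_def A_def B_def by (simp add: algebra_simps add_divide_distrib)
    have e3: "(\<Sum>j\<in>J. c j * cs j x) * (\<Sum>i\<in>Nz. K i * cs i x) = (\<Sum>j\<in>J. \<Sum>i\<in>Nz. c j * K i * (cs j x * cs i x))"
      unfolding sum_product by (intro sum.cong refl) (simp add: algebra_simps)
    show ?thesis 
      apply (subst e1)
      apply (subst e2)
      apply (unfold J_def[symmetric] Z_def[symmetric] D_def[symmetric])
      using e3 apply (simp add: power2_eq_square algebra_simps add_divide_distrib[symmetric])
      done
  qed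
  have hc: "((\<lambda>x. A * D * \<alpha>) has_integral (2 * pi * (A * D * \<alpha>))) {-pi..pi}"
    using has_integral_const_real[of "A * D * \<alpha>" "-pi" pi] by simp
  have I: "((\<lambda>x. (2 * real N / B^2) * ((\<Sum>j\<in>J. \<Sum>i\<in>Nz. c j * K i * (cs j x * cs i x))
         + D * \<alpha> * (\<Sum>j\<in>J. c j * cs j x) + A * (\<Sum>i\<in>Nz. K i * cs i x) + A * D * \<alpha>))
     has_integral ((2 * real N / B^2) * ((\<Sum>j\<in>J. \<Sum>i\<in>Nz. c j * K i * L1 j i)
         + D * \<alpha> * (\<Sum>j\<in>J. c j * L0 j) + A * (\<Sum>i\<in>Nz. K i * L0 i) + 2 * pi * (A * D * \<alpha>)))) {-pi..pi}"
    unfolding cs_def L1_def L0_def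
    by (intro has_integral_mult_right has_integral_add has_integral_sum fin cos_cos_integral
         cos_single_integral hc)
  have S3: "(\<Sum>i\<in>Nz. K i * L0 i) = 0" unfolding L0_def Nz_def by simp
  have S2: "(\<Sum>j\<in>J. c j * L0 j) = 2 * pi * Z"
  proof -
    have "(\<Sum>j\<in>J. c j * L0 j) = (\<Sum>j\<in>J. if n j = 0 then 2 * pi * c j else 0)"
      unfolding L0_def by (intro sum.cong) auto
    also have "\<dots> = (\<Sum>j\<in>{j\<in>J. n j = 0}. 2 * pi * c j)"
      by (rule sum.inter_filter[symmetric]) (rule fin)
    finally show ?thesis unfolding Z_def by (simp add: sum_distrib_left)
  qed
  define S4 where "S4 = (\<Sum>i\<in>{i\<in>{1..C}. n i \<noteq> 0}. \<Sum>j\<in>{j\<in>{1..C}. n j = n i}.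
                 c i * c j * cos (real (n i) * (mu i - mu j)) * (sin (real (n i) * \<alpha>) / (real (n i) * \<alpha>)))"
  have termeq: "c j * K i * (pi * cos (real (n j) * (mu j - mu i))) =
      pi * \<alpha> * (c i * c j * cos (real (n i) * (mu i - mu j)) * (sin (real (n i) * \<alpha>) / (real (n i) * \<alpha>)))"
    if "n i \<noteq> 0" "n j = n i" for i j
  proof -
    have cc: "cos (real (n j) * (mu j - mu i)) = cos (real (n i) * (mu i - mu j))"
      using that(2) by (metis cos_minus minus_diff_eq mult_minus_right)
    show ?thesis
    proof (cases "\<alpha> = 0")
      case True then show ?thesis by (simp add: K_def)
    next
      case False then show ?thesis unfolding cc K_def using that(1) by (simp add: field_simps)
    qed
  qed
  have S1: "(\<Sum>j\<in>J. \<Sum>i\<in>Nz. c j * K i * L1 j i) = pi * \<alpha> * S4"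
  proof -
    have "(\<Sum>j\<in>J. \<Sum>i\<in>Nz. c j * K i * L1 j i) = (\<Sum>i\<in>Nz. \<Sum>j\<in>J. c j * K i * L1 j i)"
      by (rule sum.swap)
    also have "\<dots> = (\<Sum>i\<in>Nz. \<Sum>j\<in>J. if n j = n i then c j * K i * (pi * cos (real (n j) * (mu j - mu i))) else 0)"
      unfolding L1_def Nz_def by (intro sum.cong refl) auto
    also have "\<dots> = (\<Sum>i\<in>Nz. \<Sum>j\<in>{j\<in>J. n j = n i}. c j * K i * (pi * cos (real (n j) * (mu j - mu i))))"
      by (intro sum.cong refl sum.inter_filter[symmetric] fin)
    also have "\<dots> = (\<Sum>i\<in>Nz. \<Sum>j\<in>{j\<in>J. n j = n i}. pi * \<alpha> * (c i * c j * cos (real (n i) * (mu i - mu j)) * (sin (real (n i) * \<alpha>) / (real (n i) * \<alpha>))))"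
      unfolding Nz_def by (intro sum.cong refl termeq) auto
    also have "\<dots> = pi * \<alpha> * S4"
      unfolding S4_def Nz_def J_def by (simp add: sum_distrib_left)
    finally show ?thesis .
  qed
  have val: "(2 * real N / B^2) * ((\<Sum>j\<in>J. \<Sum>i\<in>Nz. c j * K i * L1 j i)
         + D * \<alpha> * (\<Sum>j\<in>J. c j * L0 j) + A * (\<Sum>i\<in>Nz. K i * L0 i) + 2 * pi * (A * D * \<alpha>))
      = 2 * pi * real N * \<alpha> / B^2 * (S4 + 2 * ((\<Sum>i\<in>{i\<in>{1..C}. n i = 0}. c i) + A)^2)"
    unfolding S1 S2 S3 Z_def[unfolded J_def, symmetric] D_def[symmetric]
    unfolding D_def by (simp add: power2_eq_square algebra_simps)
  have "((\<lambda>x. sb C c n mu x * (2 * real N / B *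
             ((\<Sum>i\<in>{i\<in>{1..C}. n i \<noteq> 0}. c i / real (n i) * cos (real (n i) * (x - mu i))
                 * sin (real (n i) * \<alpha>))
              + ((\<Sum>i\<in>{i\<in>{1..C}. n i = 0}. c i) + A) * \<alpha>))) has_integral
      (2 * pi * real N * \<alpha> / B^2 * (S4 + 2 * ((\<Sum>i\<in>{i\<in>{1..C}. n i = 0}. c i) + A)^2))) {-pi..pi}"
    unfolding pw val[symmetric] by (rule I)
  then show ?thesis unfolding S4_def .
qed


lemma cos_shift_int: "cos (x + (2 * pi) * of_int k) = cos x"
  by (simp only: cos_add cos_int_2pin sin_int_2pin mult_1_right mult_zero_right diff_zero)

lemma exp_degree_shift:
  "exp_degree N C c n mu \<alpha> (\<theta> + 2 * pi * of_int k) = exp_degree N C c n mu \<alpha> \<theta>"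
proof -
  have "circ_dist (\<theta> + 2 * pi * of_int k) t = circ_dist \<theta> t" for t
  proof -
    have "cos (\<theta> + 2 * pi * of_int k - t) = cos (\<theta> - t + (2 * pi) * of_int k)"
      by (simp add: algebra_simps)
    then show ?thesis unfolding circ_dist_def cos_shift_int by simp
  qed
  then show ?thesis unfolding exp_degree_def by simp
qed

lemma reduce_angle:
  obtains \<theta>' k where "-pi \<le> \<theta>'" "\<theta>' < pi" "\<theta> = \<theta>' + 2 * pi * of_int k"
proof -
  define k where "k = \<lfloor>(\<theta> + pi) / (2 * pi)\<rfloor>"
  have "of_int k \<le> (\<theta> + pi) / (2 * pi)" "(\<theta> + pi) / (2 * pi) < of_int k + 1"
    unfolding k_def by linarith+
  then have "2 * pi * of_int k \<le> \<theta> + pi" "\<theta> + pi < 2 * pi * of_int k + 2 * pi"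
    using pi_gt_zero by (simp_all add: field_simps)
  then show ?thesis using that[of "\<theta> - 2 * pi * of_int k" k] by simp
qed

theorem proposition3:
  fixes N C :: nat and c mu :: "nat \<Rightarrow> real" and n :: "nat \<Rightarrow> nat" and \<alpha> :: real
  defines "A \<equiv> sbA C c" and "B \<equiv> sbB C c n"
  assumes B_pos: "B > 0"
    and alpha: "0 \<le> \<alpha>" "\<alpha> \<le> pi"
  shows "(\<forall>\<theta>\<in>{-pi..<pi}. exp_degree N C c n mu \<alpha> \<theta> =
           2 * real N / B *
             ((\<Sum>i\<in>{i\<in>{1..C}. n i \<noteq> 0}. c i / real (n i) * cos (real (n i) * (\<theta> - mu i))
                 * sin (real (n i) * \<alpha>))
              + ((\<Sum>i\<in>{i\<in>{1..C}. n i = 0}. c i) + A) * \<alpha>)) \<and>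
         integral\<^sup>L (sb_measure C c n mu) (\<lambda>\<theta>. exp_degree N C c n mu \<alpha> \<theta>) =
           2 * pi * real N * \<alpha> / B^2 *
             ((\<Sum>i\<in>{i\<in>{1..C}. n i \<noteq> 0}. \<Sum>j\<in>{j\<in>{1..C}. n j = n i}.
                 c i * c j * cos (real (n i) * (mu i - mu j)) * (sin (real (n i) * \<alpha>) / (real (n i) * \<alpha>)))
              + 2 * ((\<Sum>i\<in>{i\<in>{1..C}. n i = 0}. c i) + A)^2)"
proof -
  define G where "G \<theta> = 2 * real N / B *
             ((\<Sum>i\<in>{i\<in>{1..C}. n i \<noteq> 0}. c i / real (n i) * cos (real (n i) * (\<theta> - mu i))
                 * sin (real (n i) * \<alpha>))
              + ((\<Sum>i\<in>{i\<in>{1..C}. n i = 0}. c i) + A) * \<alpha>)" for \<theta>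
  have B': "sbB C c n > 0" using B_pos by (simp add: B_def)
  have P1: "exp_degree N C c n mu \<alpha> \<theta> = G \<theta>" if "-pi \<le> \<theta>" "\<theta> < pi" for \<theta>
    unfolding exp_degree_def measure_ball[OF B' alpha that] Fa_diff G_def A_def B_def by simp
  have Gs: "G (\<theta> + 2 * pi * of_int k) = G \<theta>" for \<theta> k
  proof -
    have "cos (real (n i) * (\<theta> + 2 * pi * of_int k - mu i)) = cos (real (n i) * (\<theta> - mu i))" for i
    proof -
      have "real (n i) * (\<theta> + 2 * pi * of_int k - mu i) = real (n i) * (\<theta> - mu i) + (2 * pi) * of_int (int (n i) * k)"
        by (simp add: algebra_simps)
      then show ?thesis by (simp only: cos_shift_int)
    qed
    then show ?thesis unfolding G_def by simp
  qed
  have Pall: "exp_degree N C c n mu \<alpha> \<theta> = G \<theta>" for \<theta>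
  proof -
    obtain \<theta>' k where th: "-pi \<le> \<theta>'" "\<theta>' < pi" "\<theta> = \<theta>' + 2 * pi * of_int k"
      by (rule reduce_angle)
    show ?thesis unfolding th(3) exp_degree_shift Gs using P1[OF th(1,2)] .
  qed
  have Gm[measurable]: "G \<in> borel_measurable borel" unfolding G_def by measurable
  have "integral\<^sup>L (sb_measure C c n mu) (\<lambda>\<theta>. exp_degree N C c n mu \<alpha> \<theta>) = integral\<^sup>L (sb_measure C c n mu) G"
    using Pall by simp
  also have "\<dots> = integral\<^sup>L lborel (\<lambda>t. (indicator {-pi..<pi} t * sb C c n mu t) *\<^sub>R G t)"
    unfolding sb_measure_def
    by (rule integral_density) (auto simp: sb_nonneg[OF B'])
  also have "\<dots> = integral\<^sup>L lborel (\<lambda>t. indicator {-pi..pi} t *\<^sub>R (sb C c n mu t * G t))"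
    by (rule integral_cong_AE) (auto intro!: eventually_mono[OF AE_lborel_singleton[of pi]] simp: indicator_def)
  also have "\<dots> = integral {-pi..pi} (\<lambda>t. sb C c n mu t * G t)"
  proof -
    have "continuous_on {-pi..pi} (\<lambda>t. sb C c n mu t * G t)"
      unfolding sb_def G_def by (intro continuous_intros)
    then have "set_integrable lborel {-pi..pi} (\<lambda>t. sb C c n mu t * G t)"
      unfolding set_integrable_def by (intro borel_integrable_compact) auto
    from set_borel_integral_eq_integral(2)[OF this] show ?thesis
      by (simp add: set_lebesgue_integral_def)
  qed
  also have "\<dots> = 2 * pi * real N * \<alpha> / B^2 *
             ((\<Sum>i\<in>{i\<in>{1..C}. n i \<noteq> 0}. \<Sum>j\<in>{j\<in>{1..C}. n j = n i}.
                 c i * c j * cos (real (n i) * (mu i - mu j)) * (sin (real (n i) * \<alpha>) / (real (n i) * \<alpha>)))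
              + 2 * ((\<Sum>i\<in>{i\<in>{1..C}. n i = 0}. c i) + A)^2)"
    unfolding G_def A_def B_def by (rule integral_unique[OF product_integral])
  finally show ?thesis using P1[unfolded G_def] by auto
qed

end
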